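(* Let $\mathcal{M}$ be a metric space whose underlying set is $\omega$, and let $\mathcal{C}(\mathcal{M})$ be its metric completion. Suppose $\mathcal{C}(\mathcal{M})$ is a proper Polish metric space (every closed ball $\{y : d(x,y)\le r\}$ is compact). Then $\mathrm{SR}(\mathcal{C}(\mathcal{M})) \leq \omega_1^{\mathcal{M}} + 1$.
   Context: The language of metric spaces is $\mathscr{U} = \{\dot d_q, \dot d^q : q \in \mathbb{Q}^+\}$ with binary relation symbols, interpreted in a metric space by $\dot d_q(x,y) \Leftrightarrow d(x,y) < q$ and $\dot d^q(x,y) \Leftrightarrow d(x,y) > q$. For a structure $\mathcal{N}$ and tuples $\bar a=(a_0,\dots,a_{p-1})$, $\bar b=(b_0,\dots,b_{p-1})$ from $\mathcal{N}$ of equal length: $\bar a \sim_0 \bar b$ iff $a_i\mapsto b_i$ ($i<p$) is a partial $\mathscr{U}$-isomorphism; $\bar a \sim_{\alpha+1}\bar b$ iff for every $a\in\mathcal{N}$ there is $b\in\mathcal{N}$ with $\bar a a\sim_\alpha \bar b b$ and for every $b\in \mathcal{N}$ there is $a\in\mathcal{N}$ with $\bar a a\sim_\alpha\bar b b$; for limit $\beta$, $\bar a\sim_\beta\bar b$ iff $\bar a\sim_\alpha\bar b$ for all $\alpha<\beta$. $\mathrm{SR}(\bar a,\bar b)$ is the least ordinal $\mu$ with $\neg(\bar a\sim_\mu\bar b)$, or $\infty$ if none exists. $\mathrm{SR}(\bar a)=\sup\{\mathrm{SR}(\bar a,\bar b): \bar b\in {}^{|\bar a|}\mathcal{N},\ \mathrm{SR}(\bar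 a,\bar b)\neq\infty\}$ and $\mathrm{SR}(\mathcal{N})=\sup\{\mathrm{SR}(\bar a)+1:\bar a\in{}^{<\omega}\mathcal{N}\}$. The metric space $\mathcal{M}$ on $\omega$ is regarded as a real by coding the interpretations of all symbols of $\mathscr{U}$ in a fixed recursive way. For a real $x$, $\omega_1^x$ is the least ordinal $\alpha$ with $L_\alpha(x)\models\mathsf{KP}$ (equivalently, the least ordinal that is not the order type of a well-ordering of $\omega$ computable from $x$). *)

theory Defs
  imports "HOL-Analysis.Analysis"
begin

datatype recf = RZero | RSucc | RProj nat | ROracle | RComp recf "recf list"
  | RPrimRec recf recf | RMinim recf

inductive eval :: "(nat \<Rightarrow> bool) \<Rightarrow> recf \<Rightarrow> nat list \<Rightarrow> nat \<Rightarrow> bool" for x where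
  eval_zero: "eval x RZero ns 0"
| eval_succ: "eval x RSucc (n # ns) (Suc n)"
| eval_proj: "k < length ns \<Longrightarrow> eval x (RProj k) ns (ns ! k)"
| eval_oracle: "eval x ROracle (n # ns) (if x n then 1 else 0)"
| eval_comp: "list_all2 (\<lambda>g m. eval x g ns m) gs ms \<Longrightarrow> eval x f ms r
      \<Longrightarrow> eval x (RComp f gs) ns r"
| eval_prec0: "eval x f ns r \<Longrightarrow> eval x (RPrimRec f g) (0 # ns) r"
| eval_precS: "eval x (RPrimRec f g) (n # ns) r \<Longrightarrow> eval x g (r # n # ns) r'
      \<Longrightarrow> eval x (RPrimRec f g) (Suc n # ns) r'"
| eval_minim: "eval x f (n # ns) 0 \<Longrightarrow> (\<forall>m<n. \<exists>r. 0 < r \<and> eval x f (m # ns) r)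
      \<Longrightarrow> eval x (RMinim f) ns n"

definition rel_computable_from :: "(nat \<Rightarrow> bool) \<Rightarrow> nat rel \<Rightarrow> bool" where
  "rel_computable_from x R \<longleftrightarrow>
     (\<exists>f. \<forall>a b. eval x f [a, b] (if (a, b) \<in> R then 1 else 0))"

text \<open>An element mu of Field W stands for the ordinal which is the order type of
  its set of strict W-predecessors.\<close>

definition is_pred_of :: "'o rel \<Rightarrow> 'o \<Rightarrow> 'o \<Rightarrow> bool" where
  "is_pred_of W nu mu \<longleftrightarrow> nu \<in> underS W mu \<and> (\<forall>xi \<in> underS W mu. (xi, nu) \<in> W)"

definition omega1_in :: "'o rel \<Rightarrow> (nat \<Rightarrow> bool) \<Rightarrow> 'o" where
  "omega1_in W x = wo_rel.minim W {mu \<in> Field W.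
      \<not> (\<exists>R. Well_order R \<and> rel_computable_from x R \<and> (R, Restr W (underS W mu)) \<in> ordIso)}"

text \<open>Partial U-isomorphism a_i \<mapsto> b_i, U = {d_q, d^q : q \<in> Q+}.\<close>
definition piso :: "'p::metric_space list \<Rightarrow> 'p list \<Rightarrow> bool" where
  "piso as bs \<longleftrightarrow> length as = length bs \<and>
     (\<forall>i < length as. \<forall>j < length as.
        (as ! i = as ! j \<longleftrightarrow> bs ! i = bs ! j) \<and>
        (\<forall>q::rat. 0 < q \<longrightarrow>
           (dist (as ! i) (as ! j) < of_rat q \<longleftrightarrow> dist (bs ! i) (bs ! j) < of_rat q) \<and>
           (dist (as ! i) (as ! j) > of_rat q \<longleftrightarrow> dist (bs ! i) (bs ! j) > of_rat q)))"

definition bf_step :: "'o rel \<Rightarrow> ('o \<Rightarrow> 'p::metric_space list \<Rightarrow> 'p list \<Rightarrow> bool)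
    \<Rightarrow> 'o \<Rightarrow> 'p list \<Rightarrow> 'p list \<Rightarrow> bool" where
  "bf_step W rec mu as bs =
    (if underS W mu = {} then piso as bs
     else if (\<exists>nu. is_pred_of W nu mu) then
       (let nu = (THE nu. is_pred_of W nu mu) in
         (\<forall>a. \<exists>b. rec nu (as @ [a]) (bs @ [b])) \<and> (\<forall>b. \<exists>a. rec nu (as @ [a]) (bs @ [b])))
     else (\<forall>nu \<in> underS W mu. rec nu as bs))"

definition bf :: "'o rel \<Rightarrow> 'o \<Rightarrow> 'p::metric_space list \<Rightarrow> 'p list \<Rightarrow> bool" where
  "bf W = wfrec (W - Id) (bf_step W)"

text \<open>SR(a,b); None stands for \<infinity>.\<close>
definition SR_pair :: "'o rel \<Rightarrow> 'p::metric_space list \<Rightarrow> 'p list \<Rightarrow> 'o option" where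
  "SR_pair W as bs =
    (if \<exists>mu \<in> Field W. \<not> bf W mu as bs
     then Some (wo_rel.minim W {mu \<in> Field W. \<not> bf W mu as bs}) else None)"

definition SR_tuple :: "'o rel \<Rightarrow> 'p::metric_space list \<Rightarrow> 'o" where
  "SR_tuple W as = wo_rel.supr W
     {mu. \<exists>bs. length bs = length as \<and> SR_pair W as bs = Some mu}"

definition SR_struct :: "'o rel \<Rightarrow> 'p::metric_space itself \<Rightarrow> 'o" where
  "SR_struct W _ = wo_rel.supr W
     {wo_rel.suc W {SR_tuple W (as :: 'p list)} | as. True}"

text \<open>The ambient well-order used to represent ordinals: a cardinal well-order on
  'p list set, of order type 2^|'p list|, which exceeds every ordinal < |'p list|^+
  (hence all the Scott ranks of the structure on 'p, and all the suprema involved).\<close>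
abbreviation ordW :: "'p itself \<Rightarrow> ('p list set) rel" where
  "ordW _ \<equiv> card_of (UNIV :: 'p list set set)"

text \<open>Fixed recursive enumeration of Q+ (with repetitions).\<close>
definition qpos :: "nat \<Rightarrow> rat" where
  "qpos n = (case prod_decode n of (a, b) \<Rightarrow> of_nat (Suc a) / of_nat (Suc b))"

text \<open>Bit 2<<n,i>,j> codes d_{q_n}(i,j); bit 2<<n,i>,j>+1 codes d^{q_n}(i,j).\<close>
definition code_metric :: "(nat \<Rightarrow> nat \<Rightarrow> real) \<Rightarrow> nat \<Rightarrow> bool" where
  "code_metric d m =
    (case prod_decode (m div 2) of (ni, j) \<Rightarrow> (case prod_decode ni of (n, i) \<Rightarrow>
      if even m then d i j < of_rat (qpos n) else d i j > of_rat (qpos n)))"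

definition is_metric_on_nat :: "(nat \<Rightarrow> nat \<Rightarrow> real) \<Rightarrow> bool" where
  "is_metric_on_nat d \<longleftrightarrow>
     (\<forall>i j. 0 \<le> d i j) \<and> (\<forall>i j. d i j = 0 \<longleftrightarrow> i = j) \<and> (\<forall>i j. d i j = d j i) \<and>
     (\<forall>i j k. d i k \<le> d i j + d j k)"

definition is_completion :: "(nat \<Rightarrow> nat \<Rightarrow> real) \<Rightarrow> (nat \<Rightarrow> 'p::metric_space) \<Rightarrow> bool" where
  "is_completion d e \<longleftrightarrow> (\<forall>i j. dist (e i) (e j) = d i j) \<and>
     closure (range e) = UNIV \<and> complete (UNIV :: 'p set)"

end

theory Submission
  imports Defs
begin


definition pd :: "'p::metric_space list \<Rightarrow> 'p list \<Rightarrow> bool" where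
  "pd xs ys \<longleftrightarrow> length xs = length ys \<and>
     (\<forall>i<length xs. \<forall>j<length xs. dist (xs!i) (xs!j) = dist (ys!i) (ys!j))"

lemma piso_D:
  assumes "piso as bs" "i < length as" "j < length as" "0 < q"
  shows "dist (as!i) (as!j) < of_rat q \<longleftrightarrow> dist (bs!i) (bs!j) < of_rat q"
proof -
  have "\<forall>i < length as. \<forall>j < length as.
        (as ! i = as ! j \<longleftrightarrow> bs ! i = bs ! j) \<and>
        (\<forall>q::rat. 0 < q \<longrightarrow>
           (dist (as ! i) (as ! j) < of_rat q \<longleftrightarrow> dist (bs ! i) (bs ! j) < of_rat q) \<and>
           (dist (as ! i) (as ! j) > of_rat q \<longleftrightarrow> dist (bs ! i) (bs ! j) > of_rat q))"
    using assms(1) unfolding piso_def by (rule conjunct2)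
  from this[rule_format, OF assms(2,3)] have "(\<forall>q::rat. 0 < q \<longrightarrow>
           (dist (as ! i) (as ! j) < of_rat q \<longleftrightarrow> dist (bs ! i) (bs ! j) < of_rat q) \<and>
           (dist (as ! i) (as ! j) > of_rat q \<longleftrightarrow> dist (bs ! i) (bs ! j) > of_rat q))"
    by (rule conjunct2)
  hence "(dist (as ! i) (as ! j) < of_rat q \<longleftrightarrow> dist (bs ! i) (bs ! j) < of_rat q) \<and>
           (dist (as ! i) (as ! j) > of_rat q \<longleftrightarrow> dist (bs ! i) (bs ! j) > of_rat q)"
    using assms(4) by blast
  thus ?thesis by (rule conjunct1)
qed

lemma piso_pd: "piso xs ys = pd xs ys"
proof
  assume h: "piso xs ys"
  show "pd xs ys" unfolding pd_def
  proof (intro conjI allI impI)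
    show "length xs = length ys" using h unfolding piso_def by (rule conjunct1)
  next
    fix i j assume i: "i < length xs" and j: "j < length xs"
    show "dist (xs!i) (xs!j) = dist (ys!i) (ys!j)"
    proof (rule ccontr)
      assume ne: "dist (xs!i) (xs!j) \<noteq> dist (ys!i) (ys!j)"
      let ?u = "dist (xs!i) (xs!j)" and ?v = "dist (ys!i) (ys!j)"
      have "?u < ?v \<or> ?v < ?u" using ne by linarith
      then show False
      proof
        assume lt: "?u < ?v"
        obtain q where q: "?u < of_rat q" "of_rat q < ?v" using of_rat_dense[OF lt] by blast
        have "0 < (of_rat q::real)" using q(1) zero_le_dist[of "xs!i" "xs!j"] by linarith
        hence "0 < q" by simp
        hence "?u < of_rat q \<longleftrightarrow> ?v < of_rat q" using piso_D[OF h i j] by blast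
        then show False using q by linarith
      next
        assume lt: "?v < ?u"
        obtain q where q: "?v < of_rat q" "of_rat q < ?u" using of_rat_dense[OF lt] by blast
        have "0 < (of_rat q::real)" using q(1) zero_le_dist[of "ys!i" "ys!j"] by linarith
        hence "0 < q" by simp
        hence "?u < of_rat q \<longleftrightarrow> ?v < of_rat q" using piso_D[OF h i j] by blast
        then show False using q by linarith
      qed
    qed
  qed
next
  assume h: "pd xs ys"
  have L: "length xs = length ys" using h unfolding pd_def by (rule conjunct1)
  have R: "\<forall>i<length xs. \<forall>j<length xs.
        (xs ! i = xs ! j \<longleftrightarrow> ys ! i = ys ! j) \<and>
        (\<forall>q::rat. 0 < q \<longrightarrow>
           (dist (xs ! i) (xs ! j) < of_rat q \<longleftrightarrow> dist (ys ! i) (ys ! j) < of_rat q) \<and>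
           (dist (xs ! i) (xs ! j) > of_rat q \<longleftrightarrow> dist (ys ! i) (ys ! j) > of_rat q))"
  proof (intro allI impI)
    fix i j assume i: "i < length xs" and j: "j < length xs"
    have e: "dist (xs!i) (xs!j) = dist (ys!i) (ys!j)" using h i j unfolding pd_def by auto
    have A: "(xs ! i = xs ! j) \<longleftrightarrow> dist (xs!i) (xs!j) = 0" by simp
    have B: "(ys ! i = ys ! j) \<longleftrightarrow> dist (ys!i) (ys!j) = 0" by simp
    have "(xs ! i = xs ! j \<longleftrightarrow> ys ! i = ys ! j)" by (simp only: A B e)
    then show "(xs ! i = xs ! j \<longleftrightarrow> ys ! i = ys ! j) \<and>
        (\<forall>q::rat. 0 < q \<longrightarrow>
           (dist (xs ! i) (xs ! j) < of_rat q \<longleftrightarrow> dist (ys ! i) (ys ! j) < of_rat q) \<and>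
           (dist (xs ! i) (xs ! j) > of_rat q \<longleftrightarrow> dist (ys ! i) (ys ! j) > of_rat q))"
      using e by simp
  qed
  show "piso xs ys" unfolding piso_def by (rule conjI[OF L R])
qed

fun bfn :: "nat \<Rightarrow> 'p::metric_space list \<Rightarrow> 'p list \<Rightarrow> bool" where
  "bfn 0 xs ys = pd xs ys"
| "bfn (Suc n) xs ys = ((\<forall>a. \<exists>b. bfn n (xs@[a]) (ys@[b])) \<and> (\<forall>b. \<exists>a. bfn n (xs@[a]) (ys@[b])))"

lemma pd_refl: "pd xs xs" by (simp add: pd_def)

lemma pd_sym: "pd xs ys \<Longrightarrow> pd ys xs" by (simp add: pd_def)

lemma pd_prefix: "pd (xs@[a]) (ys@[b]) \<Longrightarrow> pd xs ys"
  unfolding pd_def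
  apply (elim conjE)
  apply (intro conjI allI impI)
   apply simp
  subgoal for i j
    apply (drule spec[of _ i], drule mp, simp)
    apply (drule spec[of _ j], drule mp, simp)
    apply (simp add: nth_append)
    done
  done

lemma pd_last:
  assumes "pd (xs@[a]) (ys@[b])" "xs \<noteq> []"
  shows "dist a (xs!0) = dist b (ys!0)"
proof -
  have L: "length xs = length ys" using pd_prefix[OF assms(1)] unfolding pd_def by (rule conjunct1)
  have A: "\<forall>i<length (xs@[a]). \<forall>j<length (xs@[a]).
      dist ((xs@[a])!i) ((xs@[a])!j) = dist ((ys@[b])!i) ((ys@[b])!j)"
    using assms(1) unfolding pd_def by (rule conjunct2)
  have "dist ((xs@[a])!length xs) ((xs@[a])!0) = dist ((ys@[b])!length xs) ((ys@[b])!0)"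
    using A[rule_format, of "length xs" 0] assms(2) by simp
  moreover have "ys \<noteq> []" using L assms(2) by auto
  ultimately show ?thesis using L assms(2) by (simp add: nth_append)
qed

lemma bfn_refl: "bfn n xs xs"
proof (induction n arbitrary: xs)
  case 0 thus ?case by (simp add: pd_refl)
next
  case (Suc n)
  have "\<forall>a. \<exists>b. bfn n (xs@[a]) (xs@[b])" using Suc.IH by blast
  thus ?case using Suc.IH by (subst bfn.simps(2)) blast
qed

lemma bfn_sym: "bfn n xs ys \<Longrightarrow> bfn n ys xs"
proof (induction n arbitrary: xs ys)
  case 0 thus ?case by (simp add: pd_sym)
next
  case (Suc n)
  have f1: "\<forall>a. \<exists>b. bfn n (xs@[a]) (ys@[b])" and f2: "\<forall>b. \<exists>a. bfn n (xs@[a]) (ys@[b])"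
    using Suc.prems by simp_all
  have g1: "\<forall>a. \<exists>b. bfn n (ys@[a]) (xs@[b])"
  proof
    fix a obtain b where "bfn n (xs@[b]) (ys@[a])" using f2 by blast
    thus "\<exists>b. bfn n (ys@[a]) (xs@[b])" using Suc.IH by blast
  qed
  have g2: "\<forall>b. \<exists>a. bfn n (ys@[a]) (xs@[b])"
  proof
    fix b obtain a where "bfn n (xs@[b]) (ys@[a])" using f1 by blast
    thus "\<exists>a. bfn n (ys@[a]) (xs@[b])" using Suc.IH by blast
  qed
  show ?case using g1 g2 by simp
qed

lemma bfn_pd: "bfn n xs ys \<Longrightarrow> pd xs ys"
proof (induction n arbitrary: xs ys)
  case 0 thus ?case by simp
next
  case (Suc n)
  have "\<exists>b. bfn n (xs@[undefined]) (ys@[b])" using Suc.prems by simp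
  then obtain b where "bfn n (xs@[undefined]) (ys@[b])" by blast
  thus ?case using Suc.IH pd_prefix by blast
qed

lemma bfn_Suc: "bfn (Suc n) xs ys \<Longrightarrow> bfn n xs ys"
proof (induction n arbitrary: xs ys)
  case 0
  have "pd xs ys" using bfn_pd[OF 0] .
  thus ?case by simp
next
  case (Suc n)
  have f1: "\<forall>a. \<exists>b. bfn (Suc n) (xs@[a]) (ys@[b])" and f2: "\<forall>b. \<exists>a. bfn (Suc n) (xs@[a]) (ys@[b])"
    using Suc.prems by (subst (asm) bfn.simps(2), blast)+
  have g1: "\<forall>a. \<exists>b. bfn n (xs@[a]) (ys@[b])" using f1 Suc.IH by blast
  have g2: "\<forall>b. \<exists>a. bfn n (xs@[a]) (ys@[b])" using f2 Suc.IH by blast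
  show ?case using g1 g2 by (subst bfn.simps(2)) blast
qed

lemma bfn_le: "m \<le> n \<Longrightarrow> bfn n xs ys \<Longrightarrow> bfn m xs ys"
proof (induction n)
  case 0 thus ?case by simp
next
  case (Suc n)
  show ?case
  proof (cases "m = Suc n")
    case True
    show ?thesis using Suc.prems(2) unfolding True .
  next
    case False
    hence "m \<le> n" using Suc.prems(1) by simp
    thus ?thesis using Suc.IH bfn_Suc[OF Suc.prems(2)] by blast
  qed
qed


definition tconv :: "(nat \<Rightarrow> 'p::metric_space list) \<Rightarrow> 'p list \<Rightarrow> bool" where
  "tconv xs x \<longleftrightarrow> (\<forall>k. length (xs k) = length x) \<and> (\<forall>i<length x. (\<lambda>k. xs k ! i) \<longlonglongrightarrow> x ! i)"

lemma tconv_len: "tconv xs x \<Longrightarrow> length (xs k) = length x"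
  unfolding tconv_def by blast

lemma tconv_lim: "tconv xs x \<Longrightarrow> i < length x \<Longrightarrow> (\<lambda>k. xs k ! i) \<longlonglongrightarrow> x ! i"
  unfolding tconv_def by blast

lemma tconv_const: "tconv (\<lambda>k. x) x"
  unfolding tconv_def by simp

lemma tconv_snoc:
  assumes A: "tconv xs x" and C: "c \<longlonglongrightarrow> l"
  shows "tconv (\<lambda>k. xs k @ [c k]) (x @ [l])"
  unfolding tconv_def
proof (intro conjI allI impI)
  fix k show "length (xs k @ [c k]) = length (x @ [l])" using tconv_len[OF A, of k] by simp
next
  fix i assume i: "i < length (x @ [l])"
  show "(\<lambda>k. (xs k @ [c k]) ! i) \<longlonglongrightarrow> (x @ [l]) ! i"
  proof (cases "i < length x")
    case True
    have "(\<lambda>k. (xs k @ [c k]) ! i) = (\<lambda>k. xs k ! i)"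
      using True tconv_len[OF A] by (simp add: nth_append)
    moreover have "(x @ [l]) ! i = x ! i" using True by (simp add: nth_append)
    ultimately show ?thesis using tconv_lim[OF A True] by simp
  next
    case False
    hence ii: "i = length x" using i by simp
    have "(\<lambda>k. (xs k @ [c k]) ! i) = c"
      using ii tconv_len[OF A] by (simp add: nth_append)
    moreover have "(x @ [l]) ! i = l" using ii by (simp add: nth_append)
    ultimately show ?thesis using C by simp
  qed
qed

lemma tconv_sub:
  assumes A: "tconv xs x" and S: "strict_mono \<sigma>"
  shows "tconv (\<lambda>k. xs (\<sigma> k)) x"
  unfolding tconv_def
proof (intro conjI allI impI)
  fix k show "length (xs (\<sigma> k)) = length x" using tconv_len[OF A] by simp
next
  fix i assume i: "i < length x"
  have "((\<lambda>k. xs k ! i) \<circ> \<sigma>) \<longlonglongrightarrow> x ! i"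
    using LIMSEQ_subseq_LIMSEQ[OF tconv_lim[OF A i] S] .
  thus "(\<lambda>k. xs (\<sigma> k) ! i) \<longlonglongrightarrow> x ! i" by (simp add: o_def)
qed

lemma proper_subseq:
  fixes c :: "nat \<Rightarrow> 'p::metric_space" and R :: real
  assumes P: "\<forall>(x::'p::metric_space) r. compact (cball x r)"
    and B: "\<forall>k. dist (c k) z \<le> R"
  shows "\<exists>l \<sigma>. strict_mono \<sigma> \<and> (c \<circ> \<sigma>) \<longlonglongrightarrow> (l::'p)"
proof -
  have "seq_compact (cball z R)" using P compact_imp_seq_compact by blast
  moreover have "\<forall>k. c k \<in> cball z R" using B by (simp add: dist_commute)
  ultimately show ?thesis unfolding seq_compact_def by blast
qed

lemma conv_bdd:
  assumes "(f::nat \<Rightarrow> real) \<longlonglongrightarrow> l"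
  shows "\<exists>B. \<forall>k. f k \<le> B"
proof -
  have "Bseq f" using convergent_imp_Bseq[OF convergentI[OF assms]] .
  then obtain K where "\<forall>n. norm (f n) \<le> K" unfolding Bseq_def by blast
  thus ?thesis by (metis abs_le_D1 real_norm_def)
qed

lemma forth_closed:
  fixes a :: "'p::metric_space"
  assumes P: "\<forall>(x::'p::metric_space) r. compact (cball x r)"
    and IH: "\<And>xs' ys' (x'::'p list) y'. (\<forall>k. bfn n (xs' k) (ys' k)) \<Longrightarrow> tconv xs' x' \<Longrightarrow> tconv ys' y' \<Longrightarrow> bfn n x' y'"
    and H: "\<forall>k. \<exists>b. bfn n (xs k @ [a]) (ys k @ [b])"
    and cx: "tconv xs x" and cy: "tconv ys y"
  shows "\<exists>b. bfn n (x@[a]) (y@[b])"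
proof -
  obtain c where c: "\<forall>k. bfn n (xs k @ [a]) (ys k @ [c k])"
    using choice[OF H] by blast
  have pdk: "\<And>k. pd (xs k @ [a]) (ys k @ [c k])" using c bfn_pd by blast
  have Lxy: "length x = length y"
    using pd_prefix[OF pdk[of 0]] tconv_len[OF cx, of 0] tconv_len[OF cy, of 0] unfolding pd_def by simp
  show ?thesis
  proof (cases "x = []")
    case True
    hence "y = []" using Lxy by simp
    thus ?thesis using True bfn_refl by blast
  next
    case False
    hence xk: "\<And>k. xs k \<noteq> []" using tconv_len[OF cx] by (metis length_0_conv)
    have y0: "0 < length y" using False Lxy by (metis length_greater_0_conv)
    have x0: "0 < length x" using False by simp
    have dk: "\<And>k. dist a (xs k ! 0) = dist (c k) (ys k ! 0)"
      using pd_last[OF pdk xk] .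
    have "(\<lambda>k. dist a (xs k ! 0)) \<longlonglongrightarrow> dist a (x ! 0)"
      using tendsto_dist[OF tendsto_const tconv_lim[OF cx x0]] .
    then obtain B1 where B1: "\<forall>k. dist a (xs k ! 0) \<le> B1" using conv_bdd by blast
    have "(\<lambda>k. dist (ys k ! 0) (y ! 0)) \<longlonglongrightarrow> dist (y ! 0) (y ! 0)"
      using tendsto_dist[OF tconv_lim[OF cy y0] tendsto_const] .
    then obtain B2 where B2: "\<forall>k. dist (ys k ! 0) (y ! 0) \<le> B2" using conv_bdd by blast
    have "\<forall>k. dist (c k) (y ! 0) \<le> B1 + B2"
    proof
      fix k
      have "dist (c k) (y ! 0) \<le> dist (c k) (ys k ! 0) + dist (ys k ! 0) (y ! 0)"
        by (rule dist_triangle)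
      also have "\<dots> = dist a (xs k ! 0) + dist (ys k ! 0) (y ! 0)" using dk[of k] by simp
      also have "\<dots> \<le> B1 + B2" using B1 B2 by (meson add_mono)
      finally show "dist (c k) (y ! 0) \<le> B1 + B2" .
    qed
    note bnd = this
    obtain l \<sigma> where S: "strict_mono \<sigma>" and L: "(c \<circ> \<sigma>) \<longlonglongrightarrow> l"
      using proper_subseq[OF P bnd] by blast
    have L': "(\<lambda>k. c (\<sigma> k)) \<longlonglongrightarrow> l" using L by (simp add: o_def)
    have "bfn n (x @ [a]) (y @ [l])"
    proof (rule IH[of "\<lambda>k. xs (\<sigma> k) @ [a]" "\<lambda>k. ys (\<sigma> k) @ [c (\<sigma> k)]"])
      show "\<forall>k. bfn n (xs (\<sigma> k) @ [a]) (ys (\<sigma> k) @ [c (\<sigma> k)])" using c by blast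
      show "tconv (\<lambda>k. xs (\<sigma> k) @ [a]) (x @ [a])"
        using tconv_snoc[OF tconv_sub[OF cx S] tendsto_const] .
      show "tconv (\<lambda>k. ys (\<sigma> k) @ [c (\<sigma> k)]) (y @ [l])"
        using tconv_snoc[OF tconv_sub[OF cy S] L'] .
    qed
    thus ?thesis by blast
  qed
qed

lemma bfn_closed:
  assumes P: "\<forall>(x::'p::metric_space) r. compact (cball x r)"
  shows "(\<forall>k. bfn n (xs k) (ys k)) \<Longrightarrow> tconv xs x \<Longrightarrow> tconv ys (y::'p list) \<Longrightarrow> bfn n x y"
proof (induction n arbitrary: xs ys x y)
  case 0
  have pk: "\<And>k. pd (xs k) (ys k)" using 0 by simp
  have L: "length x = length y"
    using pk[of 0] tconv_len[OF 0(2), of 0] tconv_len[OF 0(3), of 0] unfolding pd_def by simp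
  have D: "\<forall>i<length x. \<forall>j<length x. dist (x!i) (x!j) = dist (y!i) (y!j)"
  proof (intro allI impI)
    fix i j assume i: "i < length x" and j: "j < length x"
    have i': "i < length y" and j': "j < length y" using i j L by simp_all
    have "\<And>k. dist (xs k ! i) (xs k ! j) = dist (ys k ! i) (ys k ! j)"
      using pk i j tconv_len[OF 0(2)] unfolding pd_def by simp
    hence eq: "(\<lambda>k. dist (xs k ! i) (xs k ! j)) = (\<lambda>k. dist (ys k ! i) (ys k ! j))" by simp
    have l1: "(\<lambda>k. dist (xs k ! i) (xs k ! j)) \<longlonglongrightarrow> dist (x!i) (x!j)"
      using tendsto_dist[OF tconv_lim[OF 0(2) i] tconv_lim[OF 0(2) j]] .
    have l2: "(\<lambda>k. dist (ys k ! i) (ys k ! j)) \<longlonglongrightarrow> dist (y!i) (y!j)"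
      using tendsto_dist[OF tconv_lim[OF 0(3) i'] tconv_lim[OF 0(3) j']] .
    show "dist (x!i) (x!j) = dist (y!i) (y!j)" using LIMSEQ_unique[OF l1] l2 eq by simp
  qed
  show ?case using L D by (simp add: pd_def)
next
  case (Suc n)
  have F: "\<forall>a. \<exists>b. bfn n (x@[a]) (y@[b])"
  proof
    fix a
    show "\<exists>b. bfn n (x@[a]) (y@[b])"
    proof (rule forth_closed[OF P Suc.IH _ Suc(3) Suc(4)])
      show "\<forall>k. \<exists>b. bfn n (xs k @ [a]) (ys k @ [b])" using Suc(2) by simp
    qed
  qed
  have G: "\<forall>b. \<exists>a. bfn n (x@[a]) (y@[b])"
  proof
    fix b
    have "\<exists>a. bfn n (y@[b]) (x@[a])"
    proof (rule forth_closed[OF P Suc.IH _ Suc(4) Suc(3)])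
      have "\<forall>k. \<exists>a. bfn n (xs k @ [a]) (ys k @ [b])" using Suc(2) by simp
      thus "\<forall>k. \<exists>a. bfn n (ys k @ [b]) (xs k @ [a])" using bfn_sym by blast
    qed
    thus "\<exists>a. bfn n (x@[a]) (y@[b])" using bfn_sym by blast
  qed
  show ?case using F G by simp
qed

lemma bfn_all_forth:
  assumes P: "\<forall>(x::'p::metric_space) r. compact (cball x r)"
    and E: "\<forall>n. bfn n x (y::'p list)"
  shows "\<exists>b. \<forall>n. bfn n (x@[a]) (y@[b])"
proof (cases "x = []")
  case True
  have "pd x y" using E by (metis bfn.simps(1))
  hence "y = []" using True unfolding pd_def by simp
  thus ?thesis using True bfn_refl by blast
next
  case False
  have "\<forall>n. \<exists>b. bfn n (x@[a]) (y@[b])"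
  proof
    fix n
    have "bfn (Suc n) x y" using E by blast
    thus "\<exists>b. bfn n (x@[a]) (y@[b])" by simp
  qed
  then have "\<exists>c. \<forall>n. bfn n (x@[a]) (y@[c n])" by (rule choice)
  then obtain c where c: "\<forall>n. bfn n (x@[a]) (y@[c n])" by blast
  have "\<forall>n. dist (c n) (y ! 0) \<le> dist a (x ! 0)"
  proof
    fix n
    have "dist a (x!0) = dist (c n) (y!0)" using pd_last[OF bfn_pd[OF c[rule_format, of n]] False] .
    thus "dist (c n) (y ! 0) \<le> dist a (x ! 0)" by simp
  qed
  note bnd = this
  obtain l \<sigma> where S: "strict_mono \<sigma>" and L: "(c \<circ> \<sigma>) \<longlonglongrightarrow> l"
    using proper_subseq[OF P bnd] by blast
  have "\<forall>m. bfn m (x@[a]) (y@[l])"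
  proof
    fix m
    have L': "(\<lambda>k. c (\<sigma> (k + m))) \<longlonglongrightarrow> l"
      using LIMSEQ_ignore_initial_segment[OF L, of m] by (simp add: o_def)
    show "bfn m (x@[a]) (y@[l])"
    proof (rule bfn_closed[OF P])
      show "\<forall>k. bfn m (x @ [a]) (y @ [c (\<sigma> (k + m))])"
      proof
        fix k
        have "m \<le> \<sigma> (k + m)" using seq_suble[OF S, of "k+m"] by simp
        thus "bfn m (x @ [a]) (y @ [c (\<sigma> (k + m))])" using bfn_le c by blast
      qed
      show "tconv (\<lambda>k. x @ [a]) (x @ [a])" by (rule tconv_const)
      show "tconv (\<lambda>k. y @ [c (\<sigma> (k + m))]) (y @ [l])"
        using tconv_snoc[OF tconv_const L'] .
    qed
  qed
  thus ?thesis by blast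
qed

lemma bfn_all_back:
  assumes P: "\<forall>(x::'p::metric_space) r. compact (cball x r)"
    and E: "\<forall>n. bfn n x (y::'p list)"
  shows "\<exists>a. \<forall>n. bfn n (x@[a]) (y@[b])"
proof -
  have "\<forall>n. bfn n y x" using E bfn_sym by blast
  then obtain a where "\<forall>n. bfn n (y@[b]) (x@[a])" using bfn_all_forth[OF P] by blast
  thus ?thesis using bfn_sym by blast
qed



lemma pred_the:
  assumes wo: "Well_order W" and p: "is_pred_of W nu mu"
  shows "(THE nu. is_pred_of W nu mu) = nu"
proof (rule the_equality)
  show "is_pred_of W nu mu" by (rule p)
next
  fix nu' assume p': "is_pred_of W nu' mu"
  have "(nu', nu) \<in> W" using p p' unfolding is_pred_of_def by blast
  moreover have "(nu, nu') \<in> W" using p p' unfolding is_pred_of_def by blast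
  moreover have "antisym W" using wo_rel.ANTISYM[of W] wo unfolding wo_rel_def by blast
  ultimately show "nu' = nu" by (metis antisymD)
qed

lemma bf_adm:
  assumes wo: "Well_order W"
  shows "adm_wf (W - Id) (bf_step W)"
  unfolding adm_wf_def
proof (intro allI impI)
  fix f g :: "'a \<Rightarrow> 'b::metric_space list \<Rightarrow> 'b list \<Rightarrow> bool" and mu
  assume ag: "\<forall>z. (z, mu) \<in> W - Id \<longrightarrow> f z = g z"
  have ag': "\<And>z. z \<in> underS W mu \<Longrightarrow> f z = g z" using ag unfolding underS_def by auto
  show "bf_step W f mu = bf_step W g mu"
  proof (cases "underS W mu = {}")
    case True thus ?thesis unfolding bf_step_def by simp
  next
    case ne: False
    show ?thesis
    proof (cases "\<exists>nu. is_pred_of W nu mu")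
      case True
      then obtain nu where p: "is_pred_of W nu mu" by blast
      have th: "(THE nu. is_pred_of W nu mu) = nu" using pred_the[OF wo p] .
      have "nu \<in> underS W mu" using p unfolding is_pred_of_def by blast
      hence fg: "f nu = g nu" using ag' by blast
      show ?thesis unfolding bf_step_def using ne True by (simp add: th Let_def fg)
    next
      case False
      have "(\<forall>nu \<in> underS W mu. f nu as bs) = (\<forall>nu \<in> underS W mu. g nu as bs)" for as bs
        using ag' by auto
      thus ?thesis unfolding bf_step_def using ne False by (intro ext) simp
    qed
  qed
qed

lemma bf_fix:
  assumes wo: "Well_order W"
  shows "bf W = bf_step W (bf W)"
  unfolding bf_def
  by (rule wfrec_fixpoint[OF _ bf_adm[OF wo]]) (use wo wo_rel.WF[of W] in \<open>simp add: wo_rel_def\<close>)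

lemma bf_zero:
  assumes wo: "Well_order W" and z: "underS W mu = {}"
  shows "bf W mu as bs = piso as bs"
  apply (subst bf_fix[OF wo])
  using z by (simp add: bf_step_def)

lemma bf_succ:
  assumes wo: "Well_order W" and z: "underS W mu \<noteq> {}" and p: "is_pred_of W nu mu"
  shows "bf W mu as bs = ((\<forall>a. \<exists>b. bf W nu (as @ [a]) (bs @ [b])) \<and> (\<forall>b. \<exists>a. bf W nu (as @ [a]) (bs @ [b])))"
  apply (subst bf_fix[OF wo])
  using z p pred_the[OF wo p] by (simp add: bf_step_def Let_def) blast

lemma bf_lim:
  assumes wo: "Well_order W" and z: "underS W mu \<noteq> {}" and p: "\<not> (\<exists>nu. is_pred_of W nu mu)"
  shows "bf W mu as bs = (\<forall>nu \<in> underS W mu. bf W nu as bs)"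
  apply (subst bf_fix[OF wo])
  using z p by (simp add: bf_step_def)

lemma bf_all:
  assumes wo: "Well_order W"
    and P: "\<forall>(x::'p::metric_space) r. compact (cball x r)"
  shows "\<forall>(as::'p list) bs. (\<forall>n. bfn n as bs) \<longrightarrow> bf W mu as bs"
proof (induction mu rule: wf_induct[OF wo_rel.WF[of W]])
  case 1 show ?case using wo by (simp add: wo_rel_def)
next
  case (2 mu)
  show ?case
  proof (intro allI impI)
    fix as bs :: "'p list" assume E: "\<forall>n. bfn n as bs"
    show "bf W mu as bs"
    proof (cases "underS W mu = {}")
      case True
      have "bfn 0 as bs" using E by blast
      thus ?thesis using bf_zero[OF wo True, of as bs] by (simp add: piso_pd)
    next
      case ne: False
      show ?thesis
      proof (cases "\<exists>nu. is_pred_of W nu mu")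
        case True
        then obtain nu where p: "is_pred_of W nu mu" by blast
        have "nu \<in> underS W mu" using p unfolding is_pred_of_def by blast
        hence "(nu, mu) \<in> W - Id" unfolding underS_def by auto
        hence IH: "\<forall>(as::'p list) bs. (\<forall>n. bfn n as bs) \<longrightarrow> bf W nu as bs" using 2 by blast
        have F: "\<forall>a. \<exists>b. bf W nu (as @ [a]) (bs @ [b])"
        proof
          fix a
          obtain b where "\<forall>n. bfn n (as @ [a]) (bs @ [b])" using bfn_all_forth[OF P E] by blast
          thus "\<exists>b. bf W nu (as @ [a]) (bs @ [b])" using IH by blast
        qed
        have G: "\<forall>b. \<exists>a. bf W nu (as @ [a]) (bs @ [b])"
        proof
          fix b
          obtain a where "\<forall>n. bfn n (as @ [a]) (bs @ [b])" using bfn_all_back[OF P E] by blast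
          thus "\<exists>a. bf W nu (as @ [a]) (bs @ [b])" using IH by blast
        qed
        show ?thesis using bf_succ[OF wo ne p] F G by blast
      next
        case False
        have "\<forall>nu \<in> underS W mu. bf W nu as bs"
        proof
          fix nu assume "nu \<in> underS W mu"
          hence "(nu, mu) \<in> W - Id" unfolding underS_def by auto
          thus "bf W nu as bs" using 2 E by blast
        qed
        thus ?thesis using bf_lim[OF wo ne False] by blast
      qed
    qed
  qed
qed



primrec pos :: "'o rel \<Rightarrow> nat \<Rightarrow> 'o" where
  "pos W 0 = wo_rel.minim W (Field W)"
| "pos W (Suc n) = wo_rel.suc W {pos W n}"

lemma wo_facts:
  assumes wo: "Well_order W"
  shows "antisym W" "trans W" "\<forall>a \<in> Field W. \<forall>b \<in> Field W. (a,b) \<in> W \<or> (b,a) \<in> W"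
    "refl_on (Field W) W" "wo_rel W"
  using wo wo_rel.ANTISYM[of W] wo_rel.TRANS[of W] wo_rel.TOTALS[of W] wo_rel.REFL[of W]
  unfolding wo_rel_def by auto

lemma pos_props:
  assumes wo: "Well_order W" and inf: "infinite (Field W)"
  shows "pos W n \<in> Field W \<and> underS W (pos W n) = pos W ` {..<n}"
proof (induction n)
  case 0
  have ne: "Field W \<noteq> {}" using inf by auto
  have m: "pos W 0 \<in> Field W" using wo_rel.minim_inField[OF wo_facts(5)[OF wo] _ ne] by simp
  have "underS W (pos W 0) = {}"
  proof (rule ccontr)
    assume "underS W (pos W 0) \<noteq> {}"
    then obtain b where b: "b \<in> underS W (pos W 0)" by blast
    hence bW: "(b, pos W 0) \<in> W" and bne: "b \<noteq> pos W 0" unfolding underS_def by auto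
    have "b \<in> Field W" using bW by (rule FieldI1)
    hence "(pos W 0, b) \<in> W" using wo_rel.minim_least[OF wo_facts(5)[OF wo], of "Field W" b] by simp
    thus False using bW bne antisymD[OF wo_facts(1)[OF wo]] by blast
  qed
  thus ?case using m by simp
next
  case (Suc n)
  let ?p = "pos W n"
  have pF: "?p \<in> Field W" and U: "underS W ?p = pos W ` {..<n}" using Suc by auto
  have "finite (insert ?p (underS W ?p))" using U by simp
  then obtain x where x: "x \<in> Field W" "x \<notin> insert ?p (underS W ?p)"
    using inf by (meson finite_subset subsetI)
  have "(?p, x) \<in> W"
  proof -
    have "(?p, x) \<in> W \<or> (x, ?p) \<in> W" using wo_facts(3)[OF wo] pF x(1) by blast
    moreover have "(x, ?p) \<notin> W" using x(2) unfolding underS_def by auto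
    ultimately show ?thesis by blast
  qed
  hence AS: "x \<in> AboveS W {?p}" using x unfolding AboveS_def by auto
  hence ASne: "AboveS W {?p} \<noteq> {}" by blast
  have sub: "{?p} \<subseteq> Field W" using pF by simp
  let ?s = "wo_rel.suc W {?p}"
  have sA: "?s \<in> AboveS W {?p}" using wo_rel.suc_AboveS[OF wo_facts(5)[OF wo] sub ASne] .
  hence sF: "?s \<in> Field W" and sne: "?s \<noteq> ?p" and ps: "(?p, ?s) \<in> W" unfolding AboveS_def by auto
  have "underS W ?s = insert ?p (underS W ?p)"
  proof
    show "underS W ?s \<subseteq> insert ?p (underS W ?p)"
    proof
      fix b assume b: "b \<in> underS W ?s"
      hence bs: "(b, ?s) \<in> W" and bne: "b \<noteq> ?s" unfolding underS_def by auto
      show "b \<in> insert ?p (underS W ?p)"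
      proof (cases "b = ?p")
        case True thus ?thesis by simp
      next
        case False
        have bF: "b \<in> Field W" using bs by (rule FieldI1)
        have "(b, ?p) \<in> W"
        proof (rule ccontr)
          assume "(b, ?p) \<notin> W"
          hence "(?p, b) \<in> W" using wo_facts(3)[OF wo] bF pF by blast
          hence "b \<in> AboveS W {?p}" using False bF unfolding AboveS_def by auto
          hence "(?s, b) \<in> W" using wo_rel.suc_least_AboveS[OF wo_facts(5)[OF wo]] by blast
          thus False using bs bne antisymD[OF wo_facts(1)[OF wo]] by blast
        qed
        thus ?thesis using False unfolding underS_def by auto
      qed
    qed
  next
    show "insert ?p (underS W ?p) \<subseteq> underS W ?s"
    proof
      fix b assume b: "b \<in> insert ?p (underS W ?p)"
      show "b \<in> underS W ?s"
      proof (cases "b = ?p")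
        case True thus ?thesis using ps sne unfolding underS_def by auto
      next
        case False
        hence bp: "(b, ?p) \<in> W" and bne: "b \<noteq> ?p" using b unfolding underS_def by auto
        have "(b, ?s) \<in> W" using bp ps wo_facts(2)[OF wo] by (meson transD)
        moreover have "b \<noteq> ?s"
        proof
          assume "b = ?s"
          hence "(?s, ?p) \<in> W" using bp by simp
          thus False using ps sne antisymD[OF wo_facts(1)[OF wo]] by blast
        qed
        ultimately show ?thesis unfolding underS_def by auto
      qed
    qed
  qed
  hence "underS W (pos W (Suc n)) = pos W ` {..<Suc n}" using U by (simp add: lessThan_Suc)
  thus ?case using sF by simp
qed

lemma pos_less:
  assumes wo: "Well_order W" and inf: "infinite (Field W)" and mn: "m < n"
  shows "(pos W m, pos W n) \<in> W \<and> pos W m \<noteq> pos W n"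
proof -
  have "pos W m \<in> underS W (pos W n)" using pos_props[OF wo inf, of n] mn by auto
  thus ?thesis unfolding underS_def by auto
qed

lemma pos_mono:
  assumes wo: "Well_order W" and inf: "infinite (Field W)" and mn: "m \<le> n"
  shows "(pos W m, pos W n) \<in> W"
proof (cases "m = n")
  case True
  have "pos W n \<in> Field W" using pos_props[OF wo inf] by blast
  thus ?thesis using True refl_onD[OF wo_facts(4)[OF wo]] by blast
next
  case False thus ?thesis using pos_less[OF wo inf] mn by simp
qed

lemma pos_inj:
  assumes wo: "Well_order W" and inf: "infinite (Field W)"
  shows "inj (pos W)"
proof (rule injI)
  fix m n assume e: "pos W m = pos W n"
  show "m = n"
  proof (rule ccontr)
    assume "m \<noteq> n"
    hence "m < n \<or> n < m" by arith
    thus False using pos_less[OF wo inf] e by metis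
  qed
qed

lemma pos_pred:
  assumes wo: "Well_order W" and inf: "infinite (Field W)"
  shows "is_pred_of W (pos W n) (pos W (Suc n))"
  unfolding is_pred_of_def
proof
  show "pos W n \<in> underS W (pos W (Suc n))" using pos_props[OF wo inf, of "Suc n"] by auto
  show "\<forall>xi\<in>underS W (pos W (Suc n)). (xi, pos W n) \<in> W"
  proof
    fix xi assume "xi \<in> underS W (pos W (Suc n))"
    then obtain m where "m < Suc n" "xi = pos W m" using pos_props[OF wo inf, of "Suc n"] by auto
    thus "(xi, pos W n) \<in> W" using pos_mono[OF wo inf] by simp
  qed
qed

lemma pos_below:
  assumes wo: "Well_order W" and inf: "infinite (Field W)" and x: "(x, pos W n) \<in> W"
  shows "\<exists>m. x = pos W m"
proof (cases "x = pos W n")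
  case True thus ?thesis by blast
next
  case False
  hence "x \<in> underS W (pos W n)" using x unfolding underS_def by auto
  thus ?thesis using pos_props[OF wo inf, of n] by auto
qed

lemma bf_pos:
  assumes wo: "Well_order W" and inf: "infinite (Field W)"
  shows "bf W (pos W n) as bs = bfn n (as::'p::metric_space list) bs"
proof (induction n arbitrary: as bs)
  case 0
  have "underS W (pos W 0) = {}" using pos_props[OF wo inf, of 0] by simp
  thus ?case using bf_zero[OF wo, of "pos W 0" as bs] by (simp add: piso_pd)
next
  case (Suc n)
  have ne: "underS W (pos W (Suc n)) \<noteq> {}" using pos_props[OF wo inf, of "Suc n"] by auto
  show ?case using bf_succ[OF wo ne pos_pred[OF wo inf], of as bs] Suc.IH by simp
qed

lemma SR_pair_pos:
  assumes wo: "Well_order W" and inf: "infinite (Field W)"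
    and P: "\<forall>(x::'p::metric_space) r. compact (cball x r)"
    and S: "SR_pair W (as::'p list) bs = Some mu"
  shows "\<exists>n. mu = pos W n"
proof -
  have c: "\<exists>mu \<in> Field W. \<not> bf W mu as bs" using S unfolding SR_pair_def by (auto split: if_splits)
  hence mu: "mu = wo_rel.minim W {mu \<in> Field W. \<not> bf W mu as bs}" using S unfolding SR_pair_def by auto
  have "\<not> (\<forall>n. bfn n as bs)" using c bf_all[OF wo P] by blast
  then obtain n where "\<not> bfn n as bs" by blast
  hence nb: "\<not> bf W (pos W n) as bs" using bf_pos[OF wo inf, of n as bs] by simp
  have "pos W n \<in> Field W" using pos_props[OF wo inf] by blast
  hence "(mu, pos W n) \<in> W" using nb mu wo_rel.minim_least[OF wo_facts(5)[OF wo], of "{mu \<in> Field W. \<not> bf W mu as bs}" "pos W n"] by auto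
  thus ?thesis using pos_below[OF wo inf] by blast
qed



lemma eval_proj': "k < length ns \<Longrightarrow> v = ns ! k \<Longrightarrow> eval x (RProj k) ns v"
  using eval_proj by simp

lemma eval_succ': "v = Suc n \<Longrightarrow> eval x RSucc (n # ns) v"
  using eval_succ by simp

lemma eval_comp1: "eval x g ns m \<Longrightarrow> eval x f [m] r \<Longrightarrow> eval x (RComp f [g]) ns r"
  by (rule eval_comp[where gs="[g]" and ms="[m]"]) simp_all

lemma eval_comp2: "eval x g1 ns m1 \<Longrightarrow> eval x g2 ns m2 \<Longrightarrow> eval x f [m1, m2] r
    \<Longrightarrow> eval x (RComp f [g1, g2]) ns r"
  by (rule eval_comp[where gs="[g1, g2]" and ms="[m1, m2]"]) simp_all

definition PRED :: recf where "PRED = RPrimRec RZero (RProj 1)"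

lemma eval_PRED: "eval x PRED [n] (n - 1)"
proof (induction n)
  case 0
  show ?case unfolding PRED_def by (simp, rule eval_prec0, rule eval_zero)
next
  case (Suc n)
  show ?case unfolding PRED_def
    by (rule eval_precS[OF Suc[unfolded PRED_def]], rule eval_proj') simp_all
qed

definition SUB :: recf where "SUB = RPrimRec (RProj 0) (RComp PRED [RProj 0])"

lemma eval_SUB: "eval x SUB [k, a] (a - k)"
proof (induction k)
  case 0
  show ?case unfolding SUB_def by (simp, rule eval_prec0, rule eval_proj') simp_all
next
  case (Suc k)
  have "eval x (RComp PRED [RProj 0]) [a - k, k, a] (a - k - 1)"
    by (rule eval_comp1[OF _ eval_PRED], rule eval_proj') simp_all
  hence "eval x (RComp PRED [RProj 0]) [a - k, k, a] (a - Suc k)" by simp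
  thus ?case unfolding SUB_def using eval_precS[OF Suc[unfolded SUB_def]] by blast
qed

definition ISZ :: recf where "ISZ = RPrimRec (RComp RSucc [RZero]) RZero"

lemma eval_ISZ: "eval x ISZ [m] (if m = 0 then 1 else 0)"
proof (induction m)
  case 0
  have "eval x (RComp RSucc [RZero]) [] 1"
    by (rule eval_comp1[OF eval_zero], rule eval_succ') simp
  thus ?case unfolding ISZ_def by (simp add: eval_prec0)
next
  case (Suc m)
  show ?case unfolding ISZ_def using eval_precS[OF Suc[unfolded ISZ_def] eval_zero] by simp
qed

definition AND :: recf where "AND = RPrimRec RZero (RProj 2)"

lemma eval_AND: "eval x AND [p, q] (if p = 0 then 0 else q)"
proof (induction p)
  case 0
  show ?case unfolding AND_def by (simp, rule eval_prec0, rule eval_zero)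
next
  case (Suc p)
  have "eval x (RProj 2) [if p = 0 then 0 else q, p, q] q" by (rule eval_proj') simp_all
  thus ?case unfolding AND_def using eval_precS[OF Suc[unfolded AND_def]] by simp
qed

primrec cnst :: "nat \<Rightarrow> recf" where
  "cnst 0 = RZero"
| "cnst (Suc n) = RComp RSucc [cnst n]"

lemma eval_cnst: "eval x (cnst n) ns n"
proof (induction n)
  case 0 show ?case by (simp add: eval_zero)
next
  case (Suc n) show ?case by (simp, rule eval_comp1[OF Suc], rule eval_succ') simp
qed

definition CH :: "nat \<Rightarrow> recf" where
  "CH n = RComp AND [RComp ISZ [RComp SUB [RProj 1, RProj 0]],
                     RComp ISZ [RComp ISZ [RComp SUB [RProj 1, cnst n]]]]"

lemma natLeq_on_computable: "rel_computable_from x (natLeq_on n)"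
  unfolding rel_computable_from_def
proof (intro exI allI)
  fix a b :: nat
  let ?u = "if a - b = 0 then 1 else 0 :: nat"
  let ?v0 = "if n - b = 0 then 1 else 0 :: nat"
  let ?v = "if ?v0 = 0 then 1 else 0 :: nat"
  have e1: "eval x (RComp SUB [RProj 1, RProj 0]) [a, b] (a - b)"
    by (rule eval_comp2[OF _ _ eval_SUB]; rule eval_proj') simp_all
  have e2: "eval x (RComp ISZ [RComp SUB [RProj 1, RProj 0]]) [a, b] ?u"
    by (rule eval_comp1[OF e1 eval_ISZ])
  have e3: "eval x (RComp SUB [RProj 1, cnst n]) [a, b] (n - b)"
    by (rule eval_comp2[OF _ eval_cnst eval_SUB], rule eval_proj') simp_all
  have e4: "eval x (RComp ISZ [RComp ISZ [RComp SUB [RProj 1, cnst n]]]) [a, b] ?v"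
    by (rule eval_comp1[OF eval_comp1[OF e3 eval_ISZ] eval_ISZ])
  have e5: "eval x (CH n) [a, b] (if ?u = 0 then 0 else ?v)"
    unfolding CH_def by (rule eval_comp2[OF e2 e4 eval_AND])
  have "(if ?u = 0 then 0 else ?v) = (if (a, b) \<in> natLeq_on n then 1 else 0)" by auto
  thus "eval x (CH n) [a, b] (if (a, b) \<in> natLeq_on n then 1 else 0)" using e5 by simp
qed



lemma nomax:
  assumes co: "Card_order W" and inf: "infinite (Field W)" and a: "a \<in> Field W"
  shows "AboveS W {a} \<noteq> {}"
proof
  assume emp: "AboveS W {a} = {}"
  have wo: "Well_order W" using co unfolding card_order_on_def by blast
  have FU: "Field W = insert a (underS W a)"
  proof
    show "Field W \<subseteq> insert a (underS W a)"
    proof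
      fix b assume bF: "b \<in> Field W"
      show "b \<in> insert a (underS W a)"
      proof (cases "b = a")
        case True thus ?thesis by simp
      next
        case False
        have "(a, b) \<notin> W" using emp bF False unfolding AboveS_def by auto
        hence "(b, a) \<in> W" using wo_facts(3)[OF wo] a bF by blast
        thus ?thesis using False unfolding underS_def by auto
      qed
    qed
    show "insert a (underS W a) \<subseteq> Field W" using a underS_Field by fast
  qed
  have infU: "infinite (underS W a)" using inf FU by auto
  obtain h where "bij_betw h (underS W a) (underS W a \<union> {a})"
    using infinite_imp_bij_betw2[OF infU] by blast
  hence "ordIso2 (card_of (underS W a)) (card_of (Field W))" using FU card_of_ordIso by (metis Un_insert_right sup_bot.right_neutral)
  moreover have "ordIso2 (card_of (Field W)) W" using co Card_order_iff_ordIso_card_of ordIso_symmetric by blast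
  ultimately have "ordIso2 (card_of (underS W a)) W" using ordIso_transitive by blast
  thus False using card_of_underS[OF co a] not_ordLess_ordIso by blast
qed

lemma Field_Restr_pos:
  assumes wo: "Well_order W" and inf: "infinite (Field W)"
  shows "Field (Restr W (underS W (pos W n))) = pos W ` {..<n}"
proof -
  have U: "underS W (pos W n) = pos W ` {..<n}" using pos_props[OF wo inf] by blast
  have sub: "pos W ` {..<n} \<subseteq> Field W" using pos_props[OF wo inf] by blast
  show ?thesis unfolding U
  proof
    show "Field (Restr W (pos W ` {..<n})) \<subseteq> pos W ` {..<n}" unfolding Field_def by auto
    show "pos W ` {..<n} \<subseteq> Field (Restr W (pos W ` {..<n}))"
    proof
      fix b assume b: "b \<in> pos W ` {..<n}"
      hence "(b, b) \<in> W" using sub refl_onD[OF wo_facts(4)[OF wo]] by blast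
      hence "(b, b) \<in> Restr W (pos W ` {..<n})" using b by simp
      thus "b \<in> Field (Restr W (pos W ` {..<n}))" by (rule FieldI1)
    qed
  qed
qed

lemma pos_not_S:
  assumes wo: "Well_order W" and inf: "infinite (Field W)"
  shows "\<exists>R. Well_order R \<and> rel_computable_from x R \<and> (R, Restr W (underS W (pos W n))) \<in> ordIso"
proof (intro exI conjI)
  show "Well_order (natLeq_on n)" by (rule natLeq_on_Well_order)
  show "rel_computable_from x (natLeq_on n)" by (rule natLeq_on_computable)
  have "iso (natLeq_on n) (Restr W (underS W (pos W n))) (pos W)"
    unfolding iso_iff2
  proof (intro conjI ballI)
    have "bij_betw (pos W) {..<n} (pos W ` {..<n})"
      using pos_inj[OF wo inf] by (simp add: bij_betw_def inj_on_def inj_def)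
    thus "bij_betw (pos W) (Field (natLeq_on n)) (Field (Restr W (underS W (pos W n))))"
      unfolding Field_natLeq_on Field_Restr_pos[OF wo inf] by (simp add: lessThan_def)
  next
    fix a b assume a: "a \<in> Field (natLeq_on n)" and b: "b \<in> Field (natLeq_on n)"
    have an: "a < n" and bn: "b < n" using a b unfolding Field_natLeq_on by auto
    have U: "underS W (pos W n) = pos W ` {..<n}" using pos_props[OF wo inf] by blast
    have "(pos W a, pos W b) \<in> W \<longleftrightarrow> a \<le> b"
    proof
      assume h: "(pos W a, pos W b) \<in> W"
      show "a \<le> b"
      proof (rule ccontr)
        assume "\<not> a \<le> b"
        hence "b < a" by simp
        hence "(pos W b, pos W a) \<in> W \<and> pos W b \<noteq> pos W a" using pos_less[OF wo inf] by blast
        thus False using h antisymD[OF wo_facts(1)[OF wo]] by metis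
      qed
    next
      assume "a \<le> b" thus "(pos W a, pos W b) \<in> W" using pos_mono[OF wo inf] by blast
    qed
    thus "((a, b) \<in> natLeq_on n) = ((pos W a, pos W b) \<in> Restr W (underS W (pos W n)))"
      using an bn U by auto
  qed
  thus "(natLeq_on n, Restr W (underS W (pos W n))) \<in> ordIso"
    unfolding ordIso_def using natLeq_on_Well_order Well_order_Restr[OF wo] by blast
qed

lemma main_general:
  fixes W :: "'o rel"
  assumes co: "Card_order W" and inf: "infinite (Field W)"
    and P: "\<forall>(x::'p::metric_space) r. compact (cball x r)"
    and Sne: "\<exists>a \<in> Field W. \<not> (\<exists>R. Well_order R \<and> rel_computable_from x R \<and> (R, Restr W (underS W a)) \<in> ordIso)"
  shows "(SR_struct W TYPE('p), wo_rel.suc W {omega1_in W x}) \<in> W"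
proof -
  have wo: "Well_order W" using co unfolding card_order_on_def by blast
  note wr = wo_facts(5)[OF wo]
  define S where "S = {mu \<in> Field W.
      \<not> (\<exists>R. Well_order R \<and> rel_computable_from x R \<and> (R, Restr W (underS W mu)) \<in> ordIso)}"
  have SF: "S \<subseteq> Field W" unfolding S_def by blast
  have Sne': "S \<noteq> {}" using Sne unfolding S_def by blast
  define om where "om = omega1_in W x"
  have om: "om = wo_rel.minim W S" unfolding om_def omega1_in_def S_def by simp
  have omS: "om \<in> S" using wo_rel.minim_in[OF wr SF Sne'] om by simp
  have omF: "om \<in> Field W" using omS SF by blast
  have omnp: "\<And>n. om \<noteq> pos W n" using omS pos_not_S[OF wo inf] unfolding S_def by blast
  have below: "\<And>n. (pos W n, om) \<in> W"
  proof -
    fix n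
    have pF: "pos W n \<in> Field W" using pos_props[OF wo inf] by blast
    show "(pos W n, om) \<in> W"
    proof (rule ccontr)
      assume "(pos W n, om) \<notin> W"
      hence "(om, pos W n) \<in> W" using wo_facts(3)[OF wo] pF omF by blast
      thus False using pos_below[OF wo inf] omnp by blast
    qed
  qed
  define s where "s = wo_rel.suc W {om}"
  have ASne: "AboveS W {om} \<noteq> {}" using nomax[OF co inf omF] .
  have sA: "s \<in> AboveS W {om}" unfolding s_def using wo_rel.suc_AboveS[OF wr _ ASne] omF by simp
  hence sF: "s \<in> Field W" and sne: "s \<noteq> om" and oms: "(om, s) \<in> W" unfolding AboveS_def by auto
  have tup: "(SR_tuple W (as::'p list), om) \<in> W" for as
  proof -
    let ?B = "{mu. \<exists>bs. length bs = length as \<and> SR_pair W as bs = Some mu}"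
    have "om \<in> Above W ?B"
      unfolding Above_def
    proof (intro CollectI conjI ballI)
      show "om \<in> Field W" by (rule omF)
      fix mu assume "mu \<in> ?B"
      then obtain bs where "SR_pair W as bs = Some mu" by blast
      then obtain n where "mu = pos W n" using SR_pair_pos[OF wo inf P] by blast
      thus "(mu, om) \<in> W" using below by simp
    qed
    moreover have "Above W ?B \<subseteq> Field W" unfolding Above_def by blast
    ultimately show ?thesis
      unfolding SR_tuple_def wo_rel.supr_def[OF wr] using wo_rel.minim_least[OF wr] by blast
  qed
  have tupF: "SR_tuple W (as::'p list) \<in> Field W" for as using tup[of as] by (rule FieldI1)
  have suc_le: "(wo_rel.suc W {SR_tuple W (as::'p list)}, s) \<in> W" for as
  proof -
    let ?t = "SR_tuple W as"
    have ts: "(?t, s) \<in> W" using tup[of as] oms wo_facts(2)[OF wo] by (meson transD)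
    have "?t \<noteq> s"
    proof
      assume "?t = s"
      hence "(s, om) \<in> W" using tup[of as] by simp
      thus False using oms sne antisymD[OF wo_facts(1)[OF wo]] by blast
    qed
    hence "s \<in> AboveS W {?t}" using ts sF unfolding AboveS_def by auto
    thus ?thesis using wo_rel.suc_least_AboveS[OF wr] by blast
  qed
  let ?C = "{wo_rel.suc W {SR_tuple W (as :: 'p list)} | as. True}"
  have "s \<in> Above W ?C" unfolding Above_def using sF suc_le by blast
  moreover have "Above W ?C \<subseteq> Field W" unfolding Above_def by blast
  ultimately have "(wo_rel.minim W (Above W ?C), s) \<in> W" using wo_rel.minim_least[OF wr] by blast
  thus ?thesis unfolding SR_struct_def wo_rel.supr_def[OF wr] s_def om_def by simp
qed



lemma infinite_list_sets: "infinite (UNIV :: 'a list set set)"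
proof
  assume fin: "finite (UNIV :: 'a list set set)"
  have "inj (\<lambda>x::'a list. {x})" by (rule injI) simp
  hence "finite (UNIV :: 'a list set)"
    using finite_imageD[OF finite_subset[OF subset_UNIV fin]] by (metis inj_on_subset subset_UNIV)
  thus False using infinite_UNIV_listI by blast
qed

instance recf :: countable by countable_datatype

lemma list_all2_det:
  "list_all2 (\<lambda>g m. P g m \<and> (\<forall>m'. P g m' \<longrightarrow> m = m')) gs ms \<Longrightarrow> list_all2 P gs ms' \<Longrightarrow> ms = ms'"
proof (induction gs arbitrary: ms ms')
  case Nil thus ?case by simp
next
  case (Cons g gs)
  obtain m ms1 where ms: "ms = m # ms1" and h1: "P g m \<and> (\<forall>m'. P g m' \<longrightarrow> m = m')"
      and t1: "list_all2 (\<lambda>g m. P g m \<and> (\<forall>m'. P g m' \<longrightarrow> m = m')) gs ms1"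
    using Cons.prems(1) by (auto simp: list_all2_Cons1)
  obtain m' ms2 where ms': "ms' = m' # ms2" and h2: "P g m'" and t2: "list_all2 P gs ms2"
    using Cons.prems(2) by (auto simp: list_all2_Cons1)
  have "m = m'" using h1 h2 by blast
  moreover have "ms1 = ms2" using Cons.IH[OF t1 t2] .
  ultimately show ?case using ms ms' by simp
qed

lemma eval_det: "eval x f ns r \<Longrightarrow> \<forall>r'. eval x f ns r' \<longrightarrow> r = r'"
proof (induction rule: eval.induct)
  case (eval_zero ns) thus ?case by (auto elim: eval.cases)
next
  case (eval_succ n ns) thus ?case by (auto elim: eval.cases)
next
  case (eval_proj k ns) thus ?case by (auto elim: eval.cases)
next
  case (eval_oracle n ns) thus ?case by (auto elim: eval.cases)
next
  case (eval_comp ns gs ms f r)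
  show ?case
  proof (intro allI impI)
    fix r' assume "eval x (RComp f gs) ns r'"
    then obtain ms' where a: "list_all2 (\<lambda>g m. eval x g ns m) gs ms'" and b: "eval x f ms' r'"
      by (cases rule: eval.cases) auto
    have "ms = ms'" using list_all2_det[OF eval_comp(1) a] .
    hence c: "eval x f ms r'" using b by simp
    show "r = r'" using eval_comp c by blast
  qed
next
  case (eval_prec0 f ns r g)
  show ?case
  proof (intro allI impI)
    fix r' assume "eval x (RPrimRec f g) (0 # ns) r'"
    hence "eval x f ns r'" by (cases rule: eval.cases) auto
    thus "r = r'" using eval_prec0 by blast
  qed
next
  case (eval_precS f g n ns r r2)
  show ?case
  proof (intro allI impI)
    fix r' assume "eval x (RPrimRec f g) (Suc n # ns) r'"
    then obtain r1 where a: "eval x (RPrimRec f g) (n # ns) r1" and b: "eval x g (r1 # n # ns) r'"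
      by (cases rule: eval.cases) auto
    have "r = r1" using eval_precS a by blast
    hence "eval x g (r # n # ns) r'" using b by simp
    thus "r2 = r'" using eval_precS by blast
  qed
next
  case (eval_minim f n ns)
  show ?case
  proof (intro allI impI)
    fix n' assume "eval x (RMinim f) ns n'"
    then have ab: "eval x f (n' # ns) 0 \<and> (\<forall>m<n'. \<exists>r. 0 < r \<and> eval x f (m # ns) r)"
      by (cases rule: eval.cases) blast+
    hence a: "eval x f (n' # ns) 0" and b: "\<forall>m<n'. \<exists>r. 0 < r \<and> eval x f (m # ns) r" by blast+
    show "n = n'"
    proof (rule ccontr)
      assume "n \<noteq> n'"
      hence "n < n' \<or> n' < n" by arith
      thus False
      proof
        assume "n < n'"
        then obtain r where r0: "0 < r" and er: "eval x f (n # ns) r" using b by blast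
        have "0 = r" using eval_minim er by blast
        thus False using r0 by simp
      next
        assume nn: "n' < n"
        have "\<forall>m<n. \<exists>r>0. eval x f (m # ns) r \<and> (\<forall>r'. eval x f (m # ns) r' \<longrightarrow> r = r')"
          using eval_minim by blast
        then obtain r where r0: "0 < r" and ru: "\<forall>r'. eval x f (n' # ns) r' \<longrightarrow> r = r'"
          using nn by blast
        have "r = 0" using ru a by blast
        thus False using r0 by simp
      qed
    qed
  qed
qed

lemma seg_less:
  assumes wo: "Well_order W" and m12: "(m1, m2) \<in> W" and ne: "m1 \<noteq> m2"
  shows "(Restr W (underS W m1), Restr W (underS W m2)) \<in> ordLess"
proof -
  let ?r = "Restr W (underS W m2)"
  have m1U: "m1 \<in> underS W m2" using m12 ne unfolding underS_def by auto
  have m1F: "m1 \<in> Field W" using m12 by (rule FieldI1)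
  have "(m1, m1) \<in> W" using m1F refl_onD[OF wo_facts(4)[OF wo]] by blast
  hence "(m1, m1) \<in> ?r" using m1U by simp
  hence Fne: "Field ?r \<noteq> {}" by (metis FieldI1 empty_iff)
  have sub: "underS W m1 \<subseteq> underS W m2"
  proof
    fix b assume b: "b \<in> underS W m1"
    hence bW: "(b, m1) \<in> W" and bne: "b \<noteq> m1" unfolding underS_def by auto
    have "(b, m2) \<in> W" using bW m12 wo_facts(2)[OF wo] by (meson transD)
    moreover have "b \<noteq> m2"
    proof
      assume "b = m2"
      hence "(m2, m1) \<in> W" using bW by simp
      thus False using m12 ne antisymD[OF wo_facts(1)[OF wo]] by blast
    qed
    ultimately show "b \<in> underS W m2" unfolding underS_def by auto
  qed
  have us: "underS ?r m1 = underS W m1"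
  proof
    show "underS ?r m1 \<subseteq> underS W m1" unfolding underS_def by auto
    show "underS W m1 \<subseteq> underS ?r m1" using sub m1U unfolding underS_def by auto
  qed
  have rr: "Restr ?r (underS ?r m1) = Restr W (underS W m1)" using us sub by auto
  have "(Restr ?r (underS ?r m1), ?r) \<in> ordLess"
    using underS_Restr_ordLess[OF Well_order_Restr[OF wo] Fne] .
  thus ?thesis using rr by simp
qed

lemma seg_inj:
  assumes wo: "Well_order W" and m1: "m1 \<in> Field W" and m2: "m2 \<in> Field W"
    and iso: "(Restr W (underS W m1), Restr W (underS W m2)) \<in> ordIso"
  shows "m1 = m2"
proof (rule ccontr)
  assume ne: "m1 \<noteq> m2"
  have "(m1, m2) \<in> W \<or> (m2, m1) \<in> W" using wo_facts(3)[OF wo] m1 m2 by blast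
  thus False
  proof
    assume "(m1, m2) \<in> W"
    thus False using seg_less[OF wo _ ne] iso not_ordLess_ordIso by blast
  next
    assume "(m2, m1) \<in> W"
    hence "(Restr W (underS W m2), Restr W (underS W m1)) \<in> ordLess" using seg_less[OF wo] ne by metis
    thus False using iso ordIso_symmetric not_ordLess_ordIso by blast
  qed
qed

lemma uncountable_list_sets: "\<not> countable (UNIV :: 'a list set set)"
proof
  assume c: "countable (UNIV :: 'a list set set)"
  have "(card_of (UNIV :: nat set), card_of (UNIV :: 'a list set)) \<in> ordLeq"
    using infinite_iff_card_of_nat[THEN iffD1, OF infinite_UNIV_listI] .
  hence "\<exists>g::nat \<Rightarrow> 'a list. inj_on g UNIV \<and> g ` UNIV \<subseteq> UNIV"
    by (subst card_of_ordLeq)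
  then obtain g :: "nat \<Rightarrow> 'a list" where g: "inj g" by blast
  have "inj (image g)" using g inj_image_eq_iff[OF g] by (simp add: inj_def)
  hence "countable (UNIV :: nat set set)"
    using countable_image_inj_on[OF countable_subset[OF subset_UNIV c]] by blast
  hence "range (from_nat_into (UNIV :: nat set set)) = UNIV" by simp
  thus False using Cantors_theorem[of "UNIV :: nat set"] by simp
qed

lemma Sne_card:
  "\<exists>a \<in> Field (card_of (UNIV :: 'a list set set)).
     \<not> (\<exists>R. Well_order R \<and> rel_computable_from x R \<and>
        (R, Restr (card_of (UNIV :: 'a list set set)) (underS (card_of (UNIV :: 'a list set set)) a)) \<in> ordIso)"
proof (rule ccontr)
  let ?W = "card_of (UNIV :: 'a list set set)"
  have wo: "Well_order ?W" by (rule card_of_Well_order)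
  assume "\<not> ?thesis"
  hence all: "\<forall>a \<in> Field ?W. \<exists>R. Well_order R \<and> rel_computable_from x R \<and> (R, Restr ?W (underS ?W a)) \<in> ordIso"
    by blast
  then obtain RR where RR: "\<forall>a \<in> Field ?W. Well_order (RR a) \<and> rel_computable_from x (RR a) \<and> (RR a, Restr ?W (underS ?W a)) \<in> ordIso"
    using bchoice[OF all] by blast
  have ex: "\<forall>a \<in> Field ?W. \<exists>f. \<forall>u v. eval x f [u, v] (if (u, v) \<in> RR a then 1 else 0)"
    using RR unfolding rel_computable_from_def by blast
  obtain FF where FF: "\<forall>a \<in> Field ?W. \<forall>u v. eval x (FF a) [u, v] (if (u, v) \<in> RR a then 1 else 0)"
    using bchoice[OF ex] by blast
  have "inj_on FF (Field ?W)"
  proof (rule inj_onI)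
    fix a b assume a: "a \<in> Field ?W" and b: "b \<in> Field ?W" and e: "FF a = FF b"
    have "RR a = RR b"
    proof (intro set_eqI)
      fix p :: "nat \<times> nat"
      obtain u v where p: "p = (u, v)" by fastforce
      have ea: "eval x (FF a) [u, v] (if (u, v) \<in> RR a then 1 else 0)" using FF a by blast
      have "eval x (FF b) [u, v] (if (u, v) \<in> RR b then 1 else 0)" using FF b by blast
      hence eb: "eval x (FF a) [u, v] (if (u, v) \<in> RR b then 1 else 0)" using e by simp
      have "(if (u, v) \<in> RR a then 1 else 0) = (if (u, v) \<in> RR b then (1::nat) else 0)"
        using eval_det[OF ea] eb by blast
      thus "p \<in> RR a \<longleftrightarrow> p \<in> RR b" using p by (auto split: if_splits)
    qed
    have i1: "(RR a, Restr ?W (underS ?W a)) \<in> ordIso" using RR a by blast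
    have i2: "(RR b, Restr ?W (underS ?W b)) \<in> ordIso" using RR b by blast
    have "(Restr ?W (underS ?W a), Restr ?W (underS ?W b)) \<in> ordIso"
      using ordIso_transitive[OF ordIso_symmetric[OF i1]] i2 \<open>RR a = RR b\<close> by simp
    thus "a = b" using seg_inj[OF wo a b] by blast
  qed
  hence "countable (Field ?W)"
    using countable_image_inj_on[of FF "Field ?W"] by simp
  thus False using uncountable_list_sets[where 'a='a] by (simp add: Field_card_of)
qed

theorem theorem6p3:
  fixes d :: "nat \<Rightarrow> nat \<Rightarrow> real" and e :: "nat \<Rightarrow> 'p::metric_space"
  assumes "is_metric_on_nat d"
    and "is_completion d e"
    and "\<forall>(x::'p) r. compact (cball x r)"
  shows "(SR_struct (ordW TYPE('p)) TYPE('p),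
          wo_rel.suc (ordW TYPE('p)) {omega1_in (ordW TYPE('p)) (code_metric d)})
         \<in> ordW TYPE('p)"
proof -
  have co: "Card_order (card_of (UNIV :: 'p list set set))" by (rule card_of_Card_order)
  have inf: "infinite (Field (card_of (UNIV :: 'p list set set)))"
    using infinite_list_sets by (simp add: Field_card_of)
  show ?thesis using main_general[OF co inf assms(3) Sne_card] .
qed

end
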